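(* Let $X,Z\in\mathbb{R}^{n\times r}$ with $XX^{T}\ne ZZ^{T}$. Let $Z_{\perp}=(I-XX^{\dagger})Z$ and define $$\alpha=\frac{\|Z_{\perp}Z_{\perp}^{T}\|_{F}}{\|XX^{T}-ZZ^{T}\|_{F}},\qquad\beta=\frac{\sigma_{\min}^{2}(X)}{\|XX^{T}-ZZ^{T}\|_{F}}\cdot\frac{\mathrm{tr}(Z_{\perp}Z_{\perp}^{T})}{\|Z_{\perp}Z_{\perp}^{T}\|_{F}},$$ and $$\delta_{\mathrm{lb}}(X,Z)=\gamma(\alpha,\beta):=\begin{cases}\sqrt{1-\alpha^{2}} & \text{if }\beta\ge\frac{\alpha}{1+\sqrt{1-\alpha^{2}}},\\ \frac{1-2\alpha\beta+\beta^{2}}{1-\beta^{2}} & \text{if }\beta<\frac{\alpha}{1+\sqrt{1-\alpha^{2}}}.\end{cases}$$ Then $\delta(X,Z)\ge\delta_{\mathrm{lb}}(X,Z)$.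
   Context: $A^{\dagger}$ denotes the Moore–Penrose pseudoinverse, $\sigma_{\min}(X)$ the smallest (i.e. $r$-th) singular value of $X\in\mathbb{R}^{n\times r}$. When $Z_{\perp}=0$ (so $\alpha=0$ and $\gamma=1$ regardless), $\beta$ may be taken as $\sigma_{\min}^{2}(X)/\|XX^{T}-ZZ^{T}\|_{F}$. A linear map $\mathcal{A}:\mathbb{R}^{n\times n}\to\mathbb{R}^{m}$ satisfies $(\delta,p)$-RIP if $0\le\delta<1$ and there is $\nu>0$ with $(1-\delta)\|E\|_{F}^{2}\le\frac{1}{\nu}\|\mathcal{A}(E)\|^{2}\le(1+\delta)\|E\|_{F}^{2}$ for all $E\in\mathbb{R}^{n\times n}$ of rank at most $p$. With $r^{\star}=\mathrm{rank}(Z)$, $\delta(X,Z)$ is the infimum of all $\delta$ for which there exist $m\ge1$ and a linear $\mathcal{A}:\mathbb{R}^{n\times n}\to\mathbb{R}^{m}$ satisfying $(\delta,r+r^{\star})$-RIP such that $f_{\mathcal{A}}(U)=\|\mathcal{A}(UU^{T}-ZZ^{T})\|^{2}$ (on $\mathbb{R}^{n\times r}$) satisfies $\nabla f_{\mathcal{A}}(X)=0$ and $\nabla^{2}f_{\mathcal{A}}(X)\succeq0$. *)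

theory Defs
  imports "HOL-Analysis.Analysis"
begin

text \<open>Matrices in R^(n x r) are rendered as real^'r^'n (rows indexed by 'n).
  The norm on real^'c^'b is the Frobenius norm, and the inner product is the
  Frobenius (trace) inner product.\<close>

definition pinv :: "real^'c^'b \<Rightarrow> real^'b^'c" where
  "pinv A = (THE B. A ** B ** A = A \<and> B ** A ** B = B \<and>
       transpose (A ** B) = A ** B \<and> transpose (B ** A) = B ** A)"

definition sigma_min :: "real^'r^'n \<Rightarrow> real" where
  "sigma_min X = sqrt (Min {l. \<exists>v. v \<noteq> 0 \<and> (transpose X ** X) *v v = l *\<^sub>R v})"

text \<open>A linear map A : R^(n x n) -> R^m is represented by a function whose
  components i < m are linear; components i >= m are irrelevant.\<close>
definition is_linmap :: "nat \<Rightarrow> (real^'n^'n \<Rightarrow> nat \<Rightarrow> real) \<Rightarrow> bool" where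
  "is_linmap m A = (\<forall>i<m. linear (\<lambda>E. A E i))"

definition sqn :: "nat \<Rightarrow> (real^'n^'n \<Rightarrow> nat \<Rightarrow> real) \<Rightarrow> real^'n^'n \<Rightarrow> real" where
  "sqn m A E = (\<Sum>i<m. (A E i)\<^sup>2)"

definition RIP :: "real \<Rightarrow> nat \<Rightarrow> nat \<Rightarrow> (real^'n^'n \<Rightarrow> nat \<Rightarrow> real) \<Rightarrow> bool" where
  "RIP d p m A = (0 \<le> d \<and> d < 1 \<and> (\<exists>\<nu>>0. \<forall>E::real^'n^'n. rank E \<le> p \<longrightarrow>
      (1 - d) * (norm E)\<^sup>2 \<le> (1/\<nu>) * sqn m A E \<and> (1/\<nu>) * sqn m A E \<le> (1 + d) * (norm E)\<^sup>2))"

definition fA :: "nat \<Rightarrow> (real^'n^'n \<Rightarrow> nat \<Rightarrow> real) \<Rightarrow> real^'r^'n \<Rightarrow> real^'r^'n \<Rightarrow> real" where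
  "fA m A Z U = sqn m A (U ** transpose U - Z ** transpose Z)"

definition grad :: "('a::real_inner \<Rightarrow> real) \<Rightarrow> 'a \<Rightarrow> 'a" where
  "grad f x = (THE g. (f has_derivative (\<lambda>v. g \<bullet> v)) (at x))"

definition second_order_point :: "('a::real_inner \<Rightarrow> real) \<Rightarrow> 'a \<Rightarrow> bool" where
  "second_order_point f x = ((f has_derivative (\<lambda>v. 0)) (at x) \<and>
     (\<exists>H. (grad f has_derivative H) (at x) \<and> (\<forall>v. 0 \<le> v \<bullet> H v)))"

definition delta :: "real^'r^'n \<Rightarrow> real^'r^'n \<Rightarrow> ereal" where
  "delta X Z = Inf (ereal ` {d. \<exists>m (A :: real^'n^'n \<Rightarrow> nat \<Rightarrow> real). 1 \<le> m \<and> is_linmap m A \<and>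
      RIP d (CARD('r) + rank Z) m A \<and> second_order_point (fA m A Z) X})"

definition gamma :: "real \<Rightarrow> real \<Rightarrow> real" where
  "gamma a b = (if b \<ge> a / (1 + sqrt (1 - a\<^sup>2)) then sqrt (1 - a\<^sup>2)
                else (1 - 2*a*b + b\<^sup>2) / (1 - b\<^sup>2))"

definition Zperp :: "real^'r^'n \<Rightarrow> real^'r^'n \<Rightarrow> real^'r^'n" where
  "Zperp X Z = (mat 1 - X ** pinv X) ** Z"

definition alpha_lb :: "real^'r^'n \<Rightarrow> real^'r^'n \<Rightarrow> real" where
  "alpha_lb X Z = norm (Zperp X Z ** transpose (Zperp X Z)) / norm (X ** transpose X - Z ** transpose Z)"

text \<open>When Z_perp = 0, beta is taken as sigma_min(X)^2 / ||XX^T - ZZ^T||_F.\<close>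
definition beta_lb :: "real^'r^'n \<Rightarrow> real^'r^'n \<Rightarrow> real" where
  "beta_lb X Z = (if Zperp X Z = 0
     then (sigma_min X)\<^sup>2 / norm (X ** transpose X - Z ** transpose Z)
     else (sigma_min X)\<^sup>2 / norm (X ** transpose X - Z ** transpose Z) *
          (trace (Zperp X Z ** transpose (Zperp X Z)) / norm (Zperp X Z ** transpose (Zperp X Z))))"

definition delta_lb :: "real^'r^'n \<Rightarrow> real^'r^'n \<Rightarrow> real" where
  "delta_lb X Z = gamma (alpha_lb X Z) (beta_lb X Z)"

end

theory Submission
  imports Defs
begin


lemma mm_add_rdistrib: "((A::real^'n^'m) + B) ** C = A ** C + B ** C"
  by (simp add: matrix_matrix_mult_def vec_eq_iff sum.distrib algebra_simps)
lemma mm_diff_rdistrib: "((A::real^'n^'m) - B) ** C = A ** C - B ** C"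
  by (simp add: matrix_matrix_mult_def vec_eq_iff sum_subtractf algebra_simps)
lemma mm_diff_ldistrib: "(A::real^'n^'m) ** (B - C) = A ** B - A ** C"
  by (simp add: matrix_matrix_mult_def vec_eq_iff sum_subtractf algebra_simps)
lemma mm_neg_left: "(- (A::real^'n^'m)) ** C = - (A ** C)"
  by (simp add: matrix_matrix_mult_def vec_eq_iff sum_negf)
lemma mm_neg_right: "(A::real^'n^'m) ** (- C) = - (A ** C)"
  by (simp add: matrix_matrix_mult_def vec_eq_iff sum_negf)
lemma mm_zero_left[simp]: "(0::real^'n^'m) ** C = 0"
  by (simp add: matrix_matrix_mult_def vec_eq_iff)
lemma mm_zero_right[simp]: "(A::real^'n^'m) ** (0::real^'p^'n) = 0"
  by (simp add: matrix_matrix_mult_def vec_eq_iff)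
lemma transpose_add: "transpose ((A::real^'n^'m) + B) = transpose A + transpose B"
  by (simp add: transpose_def vec_eq_iff)
lemma transpose_diff: "transpose ((A::real^'n^'m) - B) = transpose A - transpose B"
  by (simp add: transpose_def vec_eq_iff)
lemma transpose_neg: "transpose (- (A::real^'n^'m)) = - transpose A"
  by (simp add: transpose_def vec_eq_iff)
lemma transpose_zero[simp]: "transpose (0::real^'n^'m) = 0"
  by (simp add: transpose_def vec_eq_iff)

lemma inner_mm_left: "((A::real^'n^'m) ** B) \<bullet> C = B \<bullet> (transpose A ** C)"
proof -
  have "((A::real^'n^'m) ** B) \<bullet> C = (\<Sum>i\<in>UNIV. \<Sum>j\<in>UNIV. \<Sum>k\<in>UNIV. A$i$k * B$k$j * C$i$j)"
    by (simp add: inner_vec_def matrix_matrix_mult_def sum_distrib_right)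
  also have "\<dots> = (\<Sum>i\<in>UNIV. \<Sum>k\<in>UNIV. \<Sum>j\<in>UNIV. A$i$k * B$k$j * C$i$j)"
    by (rule sum.cong[OF refl], rule sum.swap)
  also have "\<dots> = (\<Sum>k\<in>UNIV. \<Sum>i\<in>UNIV. \<Sum>j\<in>UNIV. A$i$k * B$k$j * C$i$j)"
    by (rule sum.swap)
  also have "\<dots> = (\<Sum>k\<in>UNIV. \<Sum>j\<in>UNIV. \<Sum>i\<in>UNIV. A$i$k * B$k$j * C$i$j)"
    by (rule sum.cong[OF refl], rule sum.swap)
  also have "\<dots> = B \<bullet> (transpose A ** C)"
    by (simp add: inner_vec_def matrix_matrix_mult_def transpose_def sum_distrib_left mult_ac)
  finally show ?thesis .
qed

lemma inner_mm_right: "((A::real^'n^'m) ** B) \<bullet> C = A \<bullet> (C ** transpose B)"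
proof -
  have "((A::real^'n^'m) ** B) \<bullet> C = (\<Sum>i\<in>UNIV. \<Sum>j\<in>UNIV. \<Sum>k\<in>UNIV. A$i$k * B$k$j * C$i$j)"
    by (simp add: inner_vec_def matrix_matrix_mult_def sum_distrib_right)
  also have "\<dots> = (\<Sum>i\<in>UNIV. \<Sum>k\<in>UNIV. \<Sum>j\<in>UNIV. A$i$k * B$k$j * C$i$j)"
    by (rule sum.cong[OF refl], rule sum.swap)
  also have "\<dots> = A \<bullet> (C ** transpose B)"
    by (simp add: inner_vec_def matrix_matrix_mult_def transpose_def sum_distrib_left mult_ac)
  finally show ?thesis .
qed



definition bf :: "nat \<Rightarrow> (real^'n^'n \<Rightarrow> nat \<Rightarrow> real) \<Rightarrow> real^'n^'n \<Rightarrow> real^'n^'n \<Rightarrow> real" where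
  "bf m A M N = (\<Sum>i<m. A M i * A N i)"

lemma bilinear_mmt: "bilinear (\<lambda>(U::real^'r^'n) W. U ** transpose W)"
  unfolding bilinear_def
  by (auto intro!: linearI simp: matrix_add_ldistrib mm_add_rdistrib transpose_add transpose_scalar
      matrix_scalar_ac scalar_matrix_assoc)

lemma quad_deriv: "((\<lambda>U::real^'r^'n. U ** transpose U) has_derivative (\<lambda>h. U ** transpose h + h ** transpose U)) (at U)"
proof -
  have bb: "bounded_bilinear (\<lambda>(U::real^'r^'n) W. U ** transpose W)"
    using bilinear_mmt bilinear_conv_bounded_bilinear by blast
  show ?thesis
    using bounded_bilinear.FDERIV[OF bb has_derivative_ident has_derivative_ident] by simp
qed

lemma fA_differentiable:
  fixes Z :: "real^'r^'n"
  assumes lin: "is_linmap m A"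
  shows "fA m A Z differentiable (at U)"
proof -
  have "(\<lambda>U. A (U ** transpose U - Z ** transpose Z) i) differentiable (at U)" if "i < m" for i
  proof -
    have "linear (\<lambda>E. A E i)" using lin that by (simp add: is_linmap_def)
    then have bl: "bounded_linear (\<lambda>E. A E i)" by (simp add: linear_conv_bounded_linear)
    have d1: "(\<lambda>U::real^'r^'n. U ** transpose U - Z ** transpose Z) differentiable (at U)"
      unfolding differentiable_def
      using has_derivative_diff[OF quad_deriv[of U] has_derivative_const[of "Z ** transpose Z"]] by blast
    show ?thesis
      by (rule differentiable_compose[OF bounded_linear_imp_differentiable[OF bl] d1])
  qed
  then show ?thesis
    unfolding fA_def sqn_def by (auto intro!: differentiable_sum differentiable_power)
qed

lemma riesz_real:
  assumes "bounded_linear (D::'a::euclidean_space \<Rightarrow> real)"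
  shows "D = (\<lambda>v. (\<Sum>b\<in>Basis. D b *\<^sub>R b) \<bullet> v)"
proof
  fix v
  interpret bounded_linear D by fact
  have "D v = D (\<Sum>b\<in>Basis. (v \<bullet> b) *\<^sub>R b)" by (simp add: euclidean_representation)
  also have "\<dots> = (\<Sum>b\<in>Basis. (v \<bullet> b) * D b)" by (simp add: sum scale)
  also have "\<dots> = (\<Sum>b\<in>Basis. D b *\<^sub>R b) \<bullet> v" by (simp add: inner_sum_right inner_commute mult.commute)
  finally show "D v = (\<Sum>b\<in>Basis. D b *\<^sub>R b) \<bullet> v" .
qed

lemma grad_works:
  fixes f :: "'a::euclidean_space \<Rightarrow> real"
  assumes "f differentiable (at U)"
  shows "(f has_derivative (\<lambda>v. grad f U \<bullet> v)) (at U)"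
proof -
  obtain D where D: "(f has_derivative D) (at U)" using assms by (auto simp: differentiable_def)
  then have "bounded_linear D" by (rule has_derivative_bounded_linear)
  then have ex: "(f has_derivative (\<lambda>v. (\<Sum>b\<in>Basis. D b *\<^sub>R b) \<bullet> v)) (at U)"
    using D riesz_real by metis
  have un: "g1 = g2" if "(f has_derivative (\<lambda>v. g1 \<bullet> v)) (at U)" "(f has_derivative (\<lambda>v. g2 \<bullet> v)) (at U)" for g1 g2
  proof -
    have "(\<lambda>v. g1 \<bullet> v) = (\<lambda>v. g2 \<bullet> v)" using has_derivative_unique that by blast
    then have "g1 \<bullet> (g1 - g2) = g2 \<bullet> (g1 - g2)" by metis
    then have "(g1 - g2) \<bullet> (g1 - g2) = 0" by (simp add: inner_diff_left)
    then show ?thesis by simp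
  qed
  show ?thesis unfolding grad_def
    by (rule theI[of "\<lambda>g. (f has_derivative (\<lambda>v. g \<bullet> v)) (at U)", OF ex]) (metis un ex)
qed

lemma expand_quad:
  fixes X Z V :: "real^'r^'n"
  shows "(X + t *\<^sub>R V) ** transpose (X + t *\<^sub>R V) - Z ** transpose Z =
    (X ** transpose X - Z ** transpose Z) + t *\<^sub>R (X ** transpose V + V ** transpose X) + t\<^sup>2 *\<^sub>R (V ** transpose V)"
  by (simp add: vec_eq_iff matrix_matrix_mult_def transpose_def sum.distrib sum_distrib_left
      algebra_simps power2_eq_square sum_subtractf)

lemma sop_conditions:
  fixes X Z V :: "real^'r^'n"
  assumes lin: "is_linmap m A" and sop: "second_order_point (fA m A Z) X"
  shows "bf m A (X ** transpose X - Z ** transpose Z) (X ** transpose V + V ** transpose X) = 0"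
    and "0 \<le> bf m A (X ** transpose V + V ** transpose X) (X ** transpose V + V ** transpose X)
         + 2 * bf m A (X ** transpose X - Z ** transpose Z) (V ** transpose V)"
proof -
  define E where "E = X ** transpose X - Z ** transpose Z"
  define S where "S = X ** transpose V + V ** transpose X"
  define a where "a i = A E i" for i
  define s where "s i = A S i" for i
  define q where "q i = A (V ** transpose V) i" for i
  define f where "f = fA m A Z"
  define \<gamma> where "\<gamma> t = X + t *\<^sub>R V" for t :: real
  define \<phi> where "\<phi> t = (\<Sum>i<m. (a i + t * s i + t\<^sup>2 * q i)\<^sup>2)" for t
  define \<phi>' where "\<phi>' t = (\<Sum>i<m. 2 * (a i + t * s i + t\<^sup>2 * q i) * (s i + 2 * t * q i))" for t
  define c2 where "c2 = (\<Sum>i<m. 2 * (s i * s i + 2 * a i * q i))"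
  have fphi: "f \<circ> \<gamma> = \<phi>"
  proof
    fix t
    have "A (E + t *\<^sub>R S + t\<^sup>2 *\<^sub>R (V ** transpose V)) i = a i + t * s i + t\<^sup>2 * q i" if "i < m" for i
    proof -
      have l: "linear (\<lambda>E. A E i)" using lin that by (simp add: is_linmap_def)
      show ?thesis using linear_add[OF l] linear_cmul[OF l] by (simp add: a_def s_def q_def)
    qed
    then show "(f \<circ> \<gamma>) t = \<phi> t"
      by (simp add: f_def \<gamma>_def \<phi>_def fA_def sqn_def expand_quad E_def[symmetric] S_def[symmetric])
  qed
  have D1: "(\<phi> has_real_derivative \<phi>' t) (at t)" for t
    unfolding \<phi>_def \<phi>'_def
    by (auto intro!: derivative_eq_intros simp: power2_eq_square algebra_simps)
  have D2: "(\<phi>' has_real_derivative c2) (at 0)"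
    unfolding \<phi>'_def c2_def
    by (auto intro!: derivative_eq_intros simp: power2_eq_square algebra_simps)
  have G: "(\<gamma> has_derivative (\<lambda>h. h *\<^sub>R V)) (at t)" for t
    unfolding \<gamma>_def by (auto intro!: derivative_eq_intros)
  have g0: "\<gamma> 0 = X" by (simp add: \<gamma>_def)
  from sop have f0: "(f has_derivative (\<lambda>v. 0)) (at X)"
    and "\<exists>H. (grad f has_derivative H) (at X) \<and> (\<forall>v. 0 \<le> v \<bullet> H v)"
    by (auto simp: second_order_point_def f_def)
  then obtain H where H: "(grad f has_derivative H) (at X)" "\<forall>v. 0 \<le> v \<bullet> H v" by blast
  have "((f \<circ> \<gamma>) has_derivative ((\<lambda>v. 0) \<circ> (\<lambda>h. h *\<^sub>R V))) (at 0)"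
    using diff_chain_at[OF G] f0 g0 by metis
  then have "(\<phi> has_derivative (\<lambda>h. 0)) (at 0)" using fphi by (simp add: o_def)
  moreover have "(\<phi> has_derivative (\<lambda>h. \<phi>' 0 * h)) (at 0)"
    using D1[of 0] by (simp add: has_field_derivative_def)
  ultimately have e0: "(\<lambda>h::real. 0::real) = (\<lambda>h. \<phi>' 0 * h)" using has_derivative_unique by blast
  have "\<phi>' 0 = 0" using fun_cong[OF e0, of 1] by simp
  then have "(\<Sum>i<m. 2 * (a i * s i)) = 0" by (simp add: \<phi>'_def mult.assoc)
  then have "(\<Sum>i<m. a i * s i) = 0" by (simp add: sum_distrib_left[symmetric])
  then show "bf m A (X ** transpose X - Z ** transpose Z) (X ** transpose V + V ** transpose X) = 0"
    by (simp add: bf_def a_def s_def E_def S_def)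
  have fdiff: "f differentiable (at U)" for U unfolding f_def by (rule fA_differentiable[OF lin])
  have gr: "grad f (\<gamma> t) \<bullet> V = \<phi>' t" for t
  proof -
    have "((f \<circ> \<gamma>) has_derivative ((\<lambda>v. grad f (\<gamma> t) \<bullet> v) \<circ> (\<lambda>h. h *\<^sub>R V))) (at t)"
      using diff_chain_at[OF G grad_works[OF fdiff]] by blast
    then have "(\<phi> has_derivative (\<lambda>h. h * (grad f (\<gamma> t) \<bullet> V))) (at t)" using fphi by (simp add: o_def)
    moreover have "(\<phi> has_derivative (\<lambda>h. \<phi>' t * h)) (at t)"
      using D1[of t] by (simp add: has_field_derivative_def)
    ultimately have "(\<lambda>h. h * (grad f (\<gamma> t) \<bullet> V)) = (\<lambda>h. \<phi>' t * h)" using has_derivative_unique by blast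
    then show ?thesis by (metis mult_1 mult_1_right)
  qed
  have "((grad f \<circ> \<gamma>) has_derivative (H \<circ> (\<lambda>h. h *\<^sub>R V))) (at 0)"
    using diff_chain_at[OF G] H(1) g0 by metis
  then have "((\<lambda>t. (grad f \<circ> \<gamma>) t \<bullet> V) has_derivative (\<lambda>h. (H \<circ> (\<lambda>h. h *\<^sub>R V)) h \<bullet> V)) (at 0)"
    by (rule has_derivative_inner_left)
  then have "(\<phi>' has_derivative (\<lambda>h. H (h *\<^sub>R V) \<bullet> V)) (at 0)"
    using gr by (simp add: o_def)
  moreover have "(\<phi>' has_derivative (\<lambda>h. c2 * h)) (at 0)"
    using D2 by (simp add: has_field_derivative_def)
  ultimately have "(\<lambda>h. H (h *\<^sub>R V) \<bullet> V) = (\<lambda>h. c2 * h)" using has_derivative_unique by blast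
  then have "H V \<bullet> V = c2" by (metis mult_1_right scaleR_one)
  then have "0 \<le> c2" using H(2) by (metis inner_commute)
  moreover have "c2 = 2 * (\<Sum>i<m. s i * s i) + 4 * (\<Sum>i<m. a i * q i)"
    unfolding c2_def by (simp add: sum.distrib sum_distrib_left algebra_simps)
  ultimately have "0 \<le> (\<Sum>i<m. s i * s i) + 2 * (\<Sum>i<m. a i * q i)" by linarith
  then show "0 \<le> bf m A (X ** transpose V + V ** transpose X) (X ** transpose V + V ** transpose X)
         + 2 * bf m A (X ** transpose X - Z ** transpose Z) (V ** transpose V)"
    by (simp add: bf_def a_def s_def q_def E_def S_def)
qed



definition is_mp :: "real^'r^'n \<Rightarrow> real^'n^'r \<Rightarrow> bool" where
  "is_mp X B \<longleftrightarrow> X ** B ** X = X \<and> B ** X ** B = B \<and>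
       transpose (X ** B) = X ** B \<and> transpose (B ** X) = B ** X"

lemma mp_unique:
  assumes "is_mp X B1" "is_mp X B2" shows "B1 = B2"
proof -
  have a1: "X ** B1 ** X = X" "B1 ** X ** B1 = B1" "transpose (X ** B1) = X ** B1" "transpose (B1 ** X) = B1 ** X"
    using assms(1) by (auto simp: is_mp_def)
  have a2: "X ** B2 ** X = X" "B2 ** X ** B2 = B2" "transpose (X ** B2) = X ** B2" "transpose (B2 ** X) = B2 ** X"
    using assms(2) by (auto simp: is_mp_def)
  have t2: "transpose X = transpose X ** X ** B2"
  proof -
    have "transpose X = transpose (X ** B2 ** X)" using a2 by simp
    also have "\<dots> = transpose X ** transpose (X ** B2)" by (simp add: matrix_transpose_mul)
    also have "\<dots> = transpose X ** X ** B2" using a2 by (simp add: matrix_mul_assoc)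
    finally show ?thesis .
  qed
  have t1: "transpose X = B1 ** X ** transpose X"
  proof -
    have "transpose X = transpose (X ** B1 ** X)" using a1 by simp
    also have "\<dots> = transpose (B1 ** X) ** transpose X" by (simp add: matrix_transpose_mul matrix_mul_assoc)
    also have "\<dots> = B1 ** X ** transpose X" using a1 by simp
    finally show ?thesis .
  qed
  have "B1 = B1 ** X ** B1" using a1 by simp
  also have "\<dots> = B1 ** transpose (X ** B1)" using a1 by (simp add: matrix_mul_assoc)
  also have "\<dots> = B1 ** transpose B1 ** transpose X" by (simp add: matrix_transpose_mul matrix_mul_assoc)
  also have "\<dots> = B1 ** transpose B1 ** (transpose X ** X ** B2)" using t2 by simp
  also have "\<dots> = B1 ** transpose (X ** B1) ** X ** B2" by (simp add: matrix_transpose_mul matrix_mul_assoc)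
  also have "\<dots> = B1 ** X ** B1 ** X ** B2" using a1 by (simp add: matrix_mul_assoc)
  also have "\<dots> = B1 ** X ** B2" using a1 by (simp add: matrix_mul_assoc)
  finally have e1: "B1 = B1 ** X ** B2" .
  have "B2 = B2 ** X ** B2" using a2 by simp
  also have "\<dots> = transpose (B2 ** X) ** B2" using a2 by simp
  also have "\<dots> = transpose X ** transpose B2 ** B2" by (simp add: matrix_transpose_mul)
  also have "\<dots> = (B1 ** X ** transpose X) ** transpose B2 ** B2" using t1 by simp
  also have "\<dots> = B1 ** X ** transpose (B2 ** X) ** B2" by (simp add: matrix_transpose_mul matrix_mul_assoc)
  also have "\<dots> = B1 ** X ** B2 ** X ** B2" using a2 by (simp add: matrix_mul_assoc)
  also have "\<dots> = B1 ** X ** B2" by (metis a2(2) matrix_mul_assoc)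
  finally have e2: "B2 = B1 ** X ** B2" .
  show ?thesis using e1 e2 by simp
qed

lemma tX_inner: "(transpose X *v y) \<bullet> k = y \<bullet> ((X::real^'r^'n) *v k)"
  by (simp add: dot_lmul_matrix)

lemma sym_matrix:
  fixes M :: "real^'n^'n"
  assumes "\<And>x y. (M *v x) \<bullet> y = x \<bullet> (M *v y)"
  shows "transpose M = M"
proof -
  have "M $ j $ i = M $ i $ j" for i j
  proof -
    have "(M *v axis i 1) \<bullet> axis j 1 = axis i 1 \<bullet> (M *v axis j 1)" by (rule assms)
    then show ?thesis
      by (simp add: inner_axis inner_axis' matrix_vector_mult_basis column_def)
  qed
  then show ?thesis by (simp add: transpose_def vec_eq_iff)
qed

lemma mp_exists: "\<exists>B. is_mp (X::real^'r^'n) B"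
proof -
  define Vs where "Vs = range (\<lambda>y. transpose X *v y)"
  define Cs where "Cs = range (\<lambda>x. X *v x)"
  have subV: "subspace Vs" unfolding Vs_def
    by (rule real_vector.linear_subspace_image) auto
  have subC: "subspace Cs" unfolding Cs_def
    by (rule real_vector.linear_subspace_image) auto
  have orthVK: "s \<bullet> k = 0" if "s \<in> Vs" "X *v k = 0" for s k
    using that by (auto simp: Vs_def dot_lmul_matrix)
  have inj: "inj_on (\<lambda>x. X *v x) Vs"
  proof (rule inj_onI)
    fix x1 x2 assume h: "x1 \<in> Vs" "x2 \<in> Vs" "X *v x1 = X *v x2"
    have "x1 - x2 \<in> Vs" using h subV by (simp add: subspace_diff)
    moreover have "X *v (x1 - x2) = 0" using h by (simp add: matrix_vector_mult_diff_distrib)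
    ultimately have "(x1 - x2) \<bullet> (x1 - x2) = 0" using orthVK by blast
    then show "x1 = x2" by simp
  qed
  obtain g where g: "range g \<subseteq> Vs" "linear g" "\<And>v. v \<in> Vs \<Longrightarrow> g (X *v v) = v"
    using real_vector.linear_exists_left_inverse_on[OF _ subV inj] by auto
  have decomp: "\<exists>s k. s \<in> Vs \<and> X *v k = 0 \<and> w = s + k" for w
  proof -
    obtain s k where sk: "s \<in> span Vs" "\<And>u. u \<in> span Vs \<Longrightarrow> orthogonal k u" "w = s + k"
      using orthogonal_subspace_decomp_exists by blast
    have "s \<in> Vs" using sk(1) subV by (metis span_eq_iff)
    have "transpose X *v (X *v k) \<in> Vs" by (simp add: Vs_def)
    then have "orthogonal k (transpose X *v (X *v k))" using sk(2)[OF span_base] by blast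
    then have "(X *v k) \<bullet> (X *v k) = 0" by (metis orthogonal_def tX_inner inner_commute)
    then have "X *v k = 0" by simp
    then show ?thesis using \<open>s \<in> Vs\<close> sk(3) by blast
  qed
  obtain Bs where Bs: "Bs \<subseteq> Cs" "pairwise orthogonal Bs" "\<And>x. x \<in> Bs \<Longrightarrow> norm x = 1"
      "independent Bs" "span Bs = Cs"
    using orthonormal_basis_subspace[OF subC] by metis
  have finB: "finite Bs" using Bs(4) by (rule eucl.finiteI_independent)
  define Pf where "Pf y = (\<Sum>b\<in>Bs. (b \<bullet> y) *\<^sub>R b)" for y :: "real^'n"
  have linP: "linear Pf"
    by (rule linearI) (simp_all add: Pf_def inner_add_right scaleR_add_left sum.distrib scaleR_sum_right)
  have PinC: "Pf y \<in> Cs" for y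
    unfolding Pf_def using Bs(1) subC by (auto intro!: subspace_sum subspace_mul)
  have bb: "b \<bullet> b' = (if b = b' then 1 else 0)" if "b \<in> Bs" "b' \<in> Bs" for b b'
  proof (cases "b = b'")
    case True then show ?thesis using Bs(3) that by (simp add: dot_square_norm)
  next
    case False then show ?thesis using Bs(2) that by (auto simp: pairwise_def orthogonal_def)
  qed
  have Pb: "(y - Pf y) \<bullet> b = 0" if "b \<in> Bs" for y b
  proof -
    have "Pf y \<bullet> b = (\<Sum>b'\<in>Bs. (b' \<bullet> y) * (b' \<bullet> b))" by (simp add: Pf_def inner_sum_left)
    also have "\<dots> = (\<Sum>b'\<in>Bs. if b' = b then b \<bullet> y else 0)"
      by (rule sum.cong) (auto simp: bb that)
    also have "\<dots> = b \<bullet> y" using finB that by simp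
    finally show ?thesis by (simp add: inner_diff_left inner_diff_right inner_commute)
  qed
  have Porth: "(y - Pf y) \<bullet> c = 0" if "c \<in> Cs" for y c
  proof -
    have "orthogonal (y - Pf y) c"
      by (rule orthogonal_to_span[of c Bs]) (use that Bs(5) Pb in \<open>auto simp: orthogonal_def\<close>)
    then show ?thesis by (simp add: orthogonal_def)
  qed
  have Pid: "Pf c = c" if "c \<in> Cs" for c
  proof -
    have "c - Pf c \<in> Cs" using that PinC subC by (simp add: subspace_diff)
    then have "(c - Pf c) \<bullet> (c - Pf c) = 0" using Porth by blast
    then show ?thesis by simp
  qed
  have Psym: "Pf y \<bullet> y' = y \<bullet> Pf y'" for y y'
    by (simp add: Pf_def inner_sum_left inner_sum_right mult.commute inner_commute)
  define B where "B = matrix (g \<circ> Pf)"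
  have linGP: "linear (g \<circ> Pf)" using g(2) linP by (simp add: linear_compose)
  have Bv: "B *v y = g (Pf y)" for y
    using matrix_vector_mul(2)[OF linGP] unfolding B_def by (metis comp_apply)
  have i1: "X *v g (Pf y) = Pf y" for y
  proof -
    obtain w where w: "Pf y = X *v w" using PinC[of y] by (auto simp: Cs_def)
    obtain s k where sk: "s \<in> Vs" "X *v k = 0" "w = s + k" using decomp by blast
    have "X *v w = X *v s" using sk by (simp add: matrix_vector_right_distrib)
    then show ?thesis using w g(3)[OF sk(1)] by simp
  qed
  have i2: "g (Pf (X *v x)) \<in> Vs \<and> X *v (x - g (Pf (X *v x))) = 0" for x
  proof -
    obtain s k where sk: "s \<in> Vs" "X *v k = 0" "x = s + k" using decomp by blast
    have XC: "X *v x \<in> Cs" by (simp add: Cs_def)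
    have "X *v x = X *v s" using sk by (simp add: matrix_vector_right_distrib)
    then have "g (Pf (X *v x)) = s" using Pid[OF XC] g(3)[OF sk(1)] by simp
    then show ?thesis using sk by simp
  qed
  have i3: "g (Pf (X *v v)) = v" if "v \<in> Vs" for v
  proof -
    have "X *v v \<in> Cs" by (simp add: Cs_def)
    then show ?thesis using Pid g(3)[OF that] by simp
  qed
  have m1: "X ** B ** X = X"
  proof -
    have "X *v (B *v (X *v x)) = X *v x" for x
    proof -
      have "X *v x \<in> Cs" by (simp add: Cs_def)
      then show ?thesis using Bv i1[of "X *v x"] Pid[of "X *v x"] by simp
    qed
    then show ?thesis by (simp add: matrix_eq matrix_vector_mul_assoc[symmetric])
  qed
  have m2: "B ** X ** B = B"
  proof -
    have "g (Pf y) \<in> Vs" for y using g(1) by auto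
    then have "B *v (X *v (B *v y)) = B *v y" for y using i3 by (metis Bv)
    then show ?thesis
      by (simp add: matrix_eq matrix_vector_mul_assoc[symmetric])
  qed
  have m3: "transpose (X ** B) = X ** B"
    by (rule sym_matrix) (simp add: matrix_vector_mul_assoc[symmetric] Bv i1 Psym)
  have m4: "transpose (B ** X) = B ** X"
  proof (rule sym_matrix)
    fix x y
    define sx where "sx = g (Pf (X *v x))"
    define sy where "sy = g (Pf (X *v y))"
    have "sx \<bullet> y = sx \<bullet> sy + sx \<bullet> (y - sy)" by (simp add: inner_diff_right)
    also have "sx \<bullet> (y - sy) = 0" using i2[of x] i2[of y] orthVK unfolding sx_def sy_def by blast
    finally have e1: "sx \<bullet> y = sx \<bullet> sy" by simp
    have "x \<bullet> sy = sx \<bullet> sy + (x - sx) \<bullet> sy" by (simp add: inner_diff_left)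
    also have "(x - sx) \<bullet> sy = 0" using i2[of x] i2[of y] orthVK unfolding sx_def sy_def
      by (metis inner_commute)
    finally have e2: "x \<bullet> sy = sx \<bullet> sy" by simp
    show "((B ** X) *v x) \<bullet> y = x \<bullet> ((B ** X) *v y)"
      using e1 e2 by (simp add: matrix_vector_mul_assoc[symmetric] Bv sx_def sy_def)
  qed
  show ?thesis using m1 m2 m3 m4 unfolding is_mp_def by blast
qed

lemma pinv_mp: "is_mp X (pinv X)"
proof -
  obtain B where "is_mp X B" using mp_exists by blast
  then have "is_mp X (THE B. is_mp X B)" using mp_unique by (metis theI)
  moreover have "pinv X = (THE B. is_mp X B)" by (simp add: pinv_def is_mp_def)
  ultimately show ?thesis by simp
qed



lemma tX_inner2: "(transpose X *v y) \<bullet> k = y \<bullet> ((X::real^'r^'n) *v k)"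
  by (simp add: dot_lmul_matrix)

lemma XtX_inner: "v \<bullet> ((transpose X ** X) *v w) = (X *v v) \<bullet> ((X::real^'r^'n) *v w)"
  by (metis inner_commute matrix_vector_mul_assoc tX_inner2)

lemma eig_exists:
  fixes X :: "real^'r^'n"
  shows "\<exists>l v. v \<noteq> 0 \<and> (transpose X ** X) *v v = l *\<^sub>R v"
proof -
  define M where "M = transpose X ** X"
  define q where "q v = v \<bullet> (M *v v)" for v
  have cont: "continuous_on (sphere 0 1) q"
    unfolding q_def by (intro continuous_intros bounded_linear.continuous_on[OF matrix_vector_mul_bounded_linear])
  obtain v0 where v0: "v0 \<in> sphere (0::real^'r) 1" "\<And>y. y \<in> sphere 0 1 \<Longrightarrow> q v0 \<le> q y"
    using continuous_attains_inf[OF compact_sphere _ cont] by (auto simp: sphere_eq_empty)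
  define lam where "lam = q v0"
  define N where "N w = M *v w - lam *\<^sub>R w" for w
  have Msym: "(M *v x) \<bullet> y = x \<bullet> (M *v y)" for x y
    unfolding M_def by (metis XtX_inner inner_commute)
  have Nsym: "N x \<bullet> y = x \<bullet> N y" for x y
    unfolding N_def inner_diff_left inner_diff_right inner_scaleR_left inner_scaleR_right
    using Msym[of x y] by (simp add: inner_commute[of x y])
  have Nlin: "N (x + t *\<^sub>R y) = N x + t *\<^sub>R N y" for x y t
    by (simp add: N_def matrix_vector_right_distrib matrix_vector_mult_scaleR algebra_simps)
  have qh: "q (c *\<^sub>R w) = c\<^sup>2 * q w" for c w
    by (simp add: q_def matrix_vector_mult_scaleR power2_eq_square)
  have Npos: "0 \<le> w \<bullet> N w" for w
  proof (cases "w = 0")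
    case True then show ?thesis by (simp add: N_def)
  next
    case False
    define u where "u = (1 / norm w) *\<^sub>R w"
    have "u \<in> sphere 0 1" using False by (simp add: u_def)
    then have "lam \<le> q u" using v0 by (simp add: lam_def)
    also have "q u = q w / (norm w)\<^sup>2" by (simp add: u_def qh power_divide)
    finally have "lam * (norm w)\<^sup>2 \<le> q w" using False by (simp add: field_simps)
    then show ?thesis by (simp add: N_def q_def inner_diff_right dot_square_norm)
  qed
  have N0: "v0 \<bullet> N v0 = 0"
  proof -
    have "v0 \<bullet> v0 = 1" using v0(1) by (simp add: dot_square_norm)
    then show ?thesis by (simp add: N_def inner_diff_right lam_def q_def)
  qed
  define a where "a = N v0"
  define c where "c = a \<bullet> N a"
  have c0: "0 \<le> c" unfolding c_def by (rule Npos)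
  have key: "0 \<le> 2 * t * (a \<bullet> a) + t\<^sup>2 * c" for t
  proof -
    have "0 \<le> (v0 + t *\<^sub>R a) \<bullet> N (v0 + t *\<^sub>R a)" by (rule Npos)
    also have "\<dots> = v0 \<bullet> N v0 + t * (a \<bullet> N v0) + t * (v0 \<bullet> N a) + t\<^sup>2 * (a \<bullet> N a)"
      by (simp add: Nlin inner_add_left inner_add_right power2_eq_square algebra_simps)
    also have "\<dots> = 2 * t * (a \<bullet> a) + t\<^sup>2 * c"
      using N0 Nsym[of v0 a] by (simp add: a_def c_def inner_commute)
    finally show ?thesis .
  qed
  have "a = 0"
  proof (rule ccontr)
    assume "a \<noteq> 0"
    then have A: "0 < a \<bullet> a" by simp
    define t where "t = - (a \<bullet> a) / (c + 1)"
    have c1: "c + 1 \<noteq> 0" using c0 by simp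
    have tc: "t * (c + 1) = - (a \<bullet> a)" using c1 by (simp add: t_def)
    have "(c + 1)\<^sup>2 * (2 * t * (a \<bullet> a) + t\<^sup>2 * c) = 2 * (a \<bullet> a) * (t * (c + 1)) * (c + 1) + (t * (c + 1))\<^sup>2 * c"
      by (simp add: power2_eq_square algebra_simps)
    also have "\<dots> = - (a \<bullet> a)\<^sup>2 * (c + 2)" unfolding tc by (simp add: power2_eq_square algebra_simps)
    also have "\<dots> < 0" using A c0 by simp
    finally have "(c + 1)\<^sup>2 * (2 * t * (a \<bullet> a) + t\<^sup>2 * c) < 0" .
    moreover have "0 \<le> (c + 1)\<^sup>2 * (2 * t * (a \<bullet> a) + t\<^sup>2 * c)" using key[of t] by simp
    ultimately show False by simp
  qed
  then have "M *v v0 = lam *\<^sub>R v0" by (simp add: a_def N_def)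
  moreover have "v0 \<noteq> 0" using v0(1) by auto
  ultimately show ?thesis unfolding M_def by blast
qed

lemma sigma_min_vec:
  fixes X :: "real^'r^'n"
  shows "\<exists>u. norm u = 1 \<and> (norm (X *v u))\<^sup>2 = (sigma_min X)\<^sup>2"
proof -
  define M where "M = transpose X ** X"
  define S where "S = {l. \<exists>v. v \<noteq> 0 \<and> M *v v = l *\<^sub>R v}"
  have Msym: "(M *v x) \<bullet> y = x \<bullet> (M *v y)" for x y
    unfolding M_def by (metis XtX_inner inner_commute)
  have ne: "S \<noteq> {}" using eig_exists[of X] by (auto simp: S_def M_def)
  define f where "f l = (SOME v. v \<noteq> 0 \<and> M *v v = l *\<^sub>R v)" for l
  have f: "f l \<noteq> 0 \<and> M *v f l = l *\<^sub>R f l" if "l \<in> S" for l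
    using that unfolding S_def f_def by (metis (mono_tags, lifting) mem_Collect_eq someI_ex)
  have orth: "f l1 \<bullet> f l2 = 0" if "l1 \<in> S" "l2 \<in> S" "l1 \<noteq> l2" for l1 l2
  proof -
    have "l1 * (f l1 \<bullet> f l2) = (M *v f l1) \<bullet> f l2" using f[OF that(1)] by simp
    also have "\<dots> = f l1 \<bullet> (M *v f l2)" by (rule Msym)
    also have "\<dots> = l2 * (f l1 \<bullet> f l2)" using f[OF that(2)] by simp
    finally show ?thesis using that(3) by simp
  qed
  have inj: "inj_on f S"
  proof (rule inj_onI)
    fix l1 l2 assume h: "l1 \<in> S" "l2 \<in> S" "f l1 = f l2"
    show "l1 = l2"
    proof (rule ccontr)
      assume "l1 \<noteq> l2"
      then have "f l1 \<bullet> f l1 = 0" using orth h by metis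
      then show False using f[OF h(1)] by simp
    qed
  qed
  have "pairwise orthogonal (f ` S)"
    unfolding pairwise_def orthogonal_def using orth by (metis imageE)
  moreover have "0 \<notin> f ` S" using f by auto
  ultimately have "independent (f ` S)" by (rule pairwise_orthogonal_independent)
  then have "finite (f ` S)" by (rule eucl.finiteI_independent)
  then have fin: "finite S" using inj by (rule finite_imageD)
  have "Min S \<in> S" using fin ne by (rule Min_in)
  then obtain v where v: "v \<noteq> 0" "M *v v = Min S *\<^sub>R v" by (auto simp: S_def)
  have nv: "(norm (X *v v))\<^sup>2 = Min S * (norm v)\<^sup>2"
  proof -
    have "(norm (X *v v))\<^sup>2 = v \<bullet> (M *v v)" unfolding M_def by (simp add: XtX_inner dot_square_norm)
    also have "\<dots> = Min S * (norm v)\<^sup>2" using v(2) by (simp add: dot_square_norm)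
    finally show ?thesis .
  qed
  have "0 \<le> Min S"
  proof -
    have "0 \<le> Min S * (norm v)\<^sup>2" using nv by (metis zero_le_power2)
    then show ?thesis using v(1) by (simp add: zero_le_mult_iff)
  qed
  define u where "u = (1 / norm v) *\<^sub>R v"
  have "norm u = 1" using v(1) by (simp add: u_def)
  moreover have "(norm (X *v u))\<^sup>2 = Min S"
    using nv v(1) by (simp add: u_def matrix_vector_mult_scaleR power_divide)
  moreover have "(sigma_min X)\<^sup>2 = Min S"
    using \<open>0 \<le> Min S\<close> by (simp add: sigma_min_def S_def M_def)
  ultimately show ?thesis by metis
qed



lemma rank_add_le: "rank ((A::real^'n^'m) + B) \<le> rank A + rank B"
proof -
  define RA where "RA = range (\<lambda>x. A *v x)"
  define RB where "RB = range (\<lambda>x. B *v x)"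
  have sA: "subspace RA" unfolding RA_def by (rule real_vector.linear_subspace_image) auto
  have sB: "subspace RB" unfolding RB_def by (rule real_vector.linear_subspace_image) auto
  have "range (\<lambda>x. (A + B) *v x) \<subseteq> {x + y |x y. x \<in> RA \<and> y \<in> RB}"
    by (auto simp: RA_def RB_def matrix_vector_mult_add_rdistrib)
  then have "rank (A + B) \<le> dim {x + y |x y. x \<in> RA \<and> y \<in> RB}"
    unfolding rank_dim_range by (rule dim_subset)
  also have "\<dots> \<le> dim RA + dim RB" using dim_sums_Int[OF sA sB] by linarith
  finally show ?thesis by (simp add: rank_dim_range RA_def RB_def)
qed

definition inF :: "real^'r^'n \<Rightarrow> real^'r^'n \<Rightarrow> real^'n^'n \<Rightarrow> bool" where
  "inF X Z M \<longleftrightarrow> (\<exists>A C. M = X ** A + Z ** C)"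

lemma inF_rank:
  fixes X Z :: "real^'r^'n"
  assumes "inF X Z M" shows "rank M \<le> CARD('r) + rank Z"
proof -
  note \<open>inF X Z M\<close>
  then obtain A C where M: "M = X ** A + Z ** C" by (auto simp: inF_def)
  have "rank M \<le> rank (X ** A) + rank (Z ** C)" unfolding M by (rule rank_add_le)
  also have "rank (X ** A) \<le> CARD('r)" using rank_mul_le_left[of X A] rank_bound[of X] by simp
  also have "rank (Z ** C) \<le> rank Z" by (rule rank_mul_le_left)
  finally show ?thesis by simp
qed

lemma inF_add: "inF X Z M \<Longrightarrow> inF X Z N \<Longrightarrow> inF X Z (M + N)"
proof -
  assume "inF X Z M" "inF X Z N"
  then obtain A1 C1 A2 C2 where "M = X ** A1 + Z ** C1" "N = X ** A2 + Z ** C2" by (auto simp: inF_def)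
  then have "M + N = X ** (A1 + A2) + Z ** (C1 + C2)" by (simp add: matrix_add_ldistrib algebra_simps)
  then show ?thesis unfolding inF_def by blast
qed
lemma inF_scale: "inF X Z M \<Longrightarrow> inF X Z (c *\<^sub>R M)"
proof -
  assume "inF X Z M"
  then obtain A1 C1 where "M = X ** A1 + Z ** C1" by (auto simp: inF_def)
  then have "c *\<^sub>R M = X ** (c *\<^sub>R A1) + Z ** (c *\<^sub>R C1)"
    by (simp add: scaleR_add_right scalar_matrix_assoc matrix_scalar_ac)
  then show ?thesis unfolding inF_def by blast
qed
lemma inF_diff: "inF X Z M \<Longrightarrow> inF X Z N \<Longrightarrow> inF X Z (M - N)"
  using inF_add[of X Z M "(-1) *\<^sub>R N"] inF_scale[of X Z N "-1"] by simp
lemma inF_left: "inF X Z (X ** A)"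
  unfolding inF_def by (rule exI[of _ A], rule exI[of _ 0]) simp
lemma inF_leftZ: "inF X Z (Z ** C)"
  unfolding inF_def by (rule exI[of _ 0], rule exI[of _ C]) simp



lemma branch1:
  fixes a d x11 x12 x22 :: real
  assumes a0: "0 \<le> a" and a1: "a \<le> 1" and d0: "0 \<le> d" and g: "x11 = - a * x12"
    and lo: "\<And>s t. (1 - d) * (s\<^sup>2 - 2 * a * s * t + t\<^sup>2) \<le> s\<^sup>2 * x11 + 2 * s * t * x12 + t\<^sup>2 * x22"
    and hi: "\<And>s t. s\<^sup>2 * x11 + 2 * s * t * x12 + t\<^sup>2 * x22 \<le> (1 + d) * (s\<^sup>2 - 2 * a * s * t + t\<^sup>2)"
  shows "sqrt (1 - a\<^sup>2) \<le> d"
proof -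
  define K where "K = sqrt (1 - a\<^sup>2)"
  have a2: "a\<^sup>2 \<le> 1" using a0 a1 by (intro power_le_one) auto
  have K0: "0 \<le> K" using a2 by (simp add: K_def)
  have hK: "K\<^sup>2 = 1 - a\<^sup>2" unfolding K_def by (rule real_sqrt_pow2) (use a2 in simp)
  show ?thesis
  proof (cases "K = 0")
    case True then show ?thesis using d0 by (simp add: K_def)
  next
    case False
    then have Kp: "0 < K" using K0 by simp
    have l: "(1 - d) * ((K+1)\<^sup>2 - 2*a*(K+1)*a + a\<^sup>2) \<le> (K+1)\<^sup>2 * x11 + 2*(K+1)*a*x12 + a\<^sup>2 * x22"
      using lo[of "K+1" a] .
    have h: "(K-1)\<^sup>2 * x11 + 2*(K-1)*(-a)*x12 + (-a)\<^sup>2 * x22 \<le> (1 + d) * ((K-1)\<^sup>2 - 2*a*(K-1)*(-a) + (-a)\<^sup>2)"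
      using hi[of "K-1" "-a"] .
    have e1: "(K+1)\<^sup>2 * x11 + 2*(K+1)*a*x12 + a\<^sup>2 * x22 = (K-1)\<^sup>2 * x11 + 2*(K-1)*(-a)*x12 + (-a)\<^sup>2 * x22"
      using g by algebra
    have e2: "(K+1)\<^sup>2 - 2*a*(K+1)*a + a\<^sup>2 = 2*K\<^sup>2*(K+1)" using hK by algebra
    have e3: "(K-1)\<^sup>2 - 2*a*(K-1)*(-a) + (-a)\<^sup>2 = 2*K\<^sup>2*(1-K)" using hK by algebra
    have "(1 - d) * (2*K\<^sup>2*(K+1)) \<le> (1 + d) * (2*K\<^sup>2*(1-K))"
      using l h e1 e2 e3 by simp
    moreover have "(1 + d) * (2*K\<^sup>2*(1-K)) - (1 - d) * (2*K\<^sup>2*(K+1)) = - 4 * K\<^sup>2 * (K - d)" by algebra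
    ultimately have "0 \<le> - 4 * K\<^sup>2 * (K - d)" by linarith
    moreover have "- 4 * K\<^sup>2 * (K - d) = - 4 * (K\<^sup>2 * (K - d))" by simp
    ultimately have "K\<^sup>2 * (K - d) \<le> 0" by linarith
    moreover have "0 < K\<^sup>2" using Kp by simp
    ultimately have "K - d \<le> 0" by (simp add: mult_le_0_iff)
    then show ?thesis by (simp add: K_def)
  qed
qed

lemma branch2:
  fixes a b d x11 x12 x22 :: real
  assumes a0: "0 < a" and a1: "a \<le> 1" and b0: "0 \<le> b" and bt: "b < a / (1 + sqrt (1 - a\<^sup>2))"
    and g: "x11 = - a * x12" and hs: "- (1 + d) * b \<le> x12"
    and lo: "\<And>s t. (1 - d) * (s\<^sup>2 - 2 * a * s * t + t\<^sup>2) \<le> s\<^sup>2 * x11 + 2 * s * t * x12 + t\<^sup>2 * x22"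
    and hi: "\<And>s t. s\<^sup>2 * x11 + 2 * s * t * x12 + t\<^sup>2 * x22 \<le> (1 + d) * (s\<^sup>2 - 2 * a * s * t + t\<^sup>2)"
  shows "(1 - 2*a*b + b\<^sup>2) / (1 - b\<^sup>2) \<le> d"
proof -
  define K where "K = sqrt (1 - a\<^sup>2)"
  have a2: "a\<^sup>2 \<le> 1" using a0 a1 by (intro power_le_one) auto
  have K0: "0 \<le> K" using a2 by (simp add: K_def)
  have hK: "K\<^sup>2 = 1 - a\<^sup>2" unfolding K_def by (rule real_sqrt_pow2) (use a2 in simp)
  have bK: "b * (1 + K) < a"
  proof -
    have "0 < 1 + K" using K0 by simp
    moreover have "b < a / (1 + K)" using bt by (simp add: K_def)
    ultimately show ?thesis by (simp add: pos_less_divide_eq)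
  qed
  have "a * b * (1 + K) < a * a" using bK a0 by (simp add: mult.assoc)
  also have "a * a = (1 - K) * (1 + K)" using hK by algebra
  finally have abK: "a * b < 1 - K" using K0 by simp
  have b1: "b < 1"
  proof -
    have "0 \<le> b * K" using b0 K0 by simp
    then have "b \<le> b * (1 + K)" by (simp add: algebra_simps)
    then show ?thesis using bK a1 by linarith
  qed
  have ab1: "0 < 1 - a * b" using abK K0 by linarith
  define D where "D = 1 - 2*a*b + b\<^sup>2"
  define k where "k = 2*b - a - a*b\<^sup>2"
  have "a * (- k) = (1 - a*b)\<^sup>2 - K\<^sup>2" using hK unfolding k_def by algebra
  moreover have "K\<^sup>2 < (1 - a*b)\<^sup>2" using abK K0 by (simp add: power_strict_mono)
  ultimately have "0 < a * (- k)" by linarith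
  then have kneg: "k < 0" using a0 by (metis mult_minus_right neg_0_less_iff_less zero_less_mult_iff not_less_iff_gr_or_eq)
  have Dpos: "0 < D"
  proof -
    have "D = (1 - a*b)\<^sup>2 + b\<^sup>2 * K\<^sup>2" unfolding D_def using hK by algebra
    moreover have "0 < (1 - a*b)\<^sup>2" using ab1 by simp
    ultimately show ?thesis by (simp add: add_pos_nonneg)
  qed
  define p1 where "p1 = 1 - a*b"
  define p2 where "p2 = (1 - a*b) * b"
  define q1 where "q1 = b * (a - b)"
  define q2 where "q2 = b * (1 - a*b)"
  have l: "(1 - d) * (p1\<^sup>2 - 2*a*p1*p2 + p2\<^sup>2) \<le> p1\<^sup>2 * x11 + 2*p1*p2*x12 + p2\<^sup>2 * x22" by (rule lo)
  have h: "q1\<^sup>2 * x11 + 2*q1*q2*x12 + q2\<^sup>2 * x22 \<le> (1 + d) * (q1\<^sup>2 - 2*a*q1*q2 + q2\<^sup>2)" by (rule hi)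
  have e1: "(p1\<^sup>2 * x11 + 2*p1*p2*x12 + p2\<^sup>2 * x22) - (q1\<^sup>2 * x11 + 2*q1*q2*x12 + q2\<^sup>2 * x22) = x12 * (D * k)"
    using g unfolding p1_def p2_def q1_def q2_def D_def k_def by algebra
  have e2: "p1\<^sup>2 - 2*a*p1*p2 + p2\<^sup>2 = (1 - a*b)\<^sup>2 * D"
    unfolding p1_def p2_def D_def by algebra
  have e3: "q1\<^sup>2 - 2*a*q1*q2 + q2\<^sup>2 = b\<^sup>2 * (1 - a\<^sup>2) * D"
    unfolding q1_def q2_def D_def by algebra
  have Dk: "D * k \<le> 0" using Dpos kneg by (simp add: mult_pos_neg less_imp_le)
  have m: "x12 * (D * k) \<le> (- (1 + d) * b) * (D * k)"
    using hs Dk by (rule mult_right_mono_neg)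
  have "(1 - d) * ((1 - a*b)\<^sup>2 * D) - (1 + d) * (b\<^sup>2 * (1 - a\<^sup>2) * D) \<le> (- (1 + d) * b) * (D * k)"
    using l h e1 m unfolding e2 e3 by linarith
  then have "D * ((1 - d) * (1 - a*b)\<^sup>2 - (1 + d) * (b\<^sup>2 * (1 - a\<^sup>2))) \<le> D * (- (1 + d) * b * k)"
    by (simp add: algebra_simps)
  then have i1: "(1 - d) * (1 - a*b)\<^sup>2 - (1 + d) * (b\<^sup>2 * (1 - a\<^sup>2)) \<le> - (1 + d) * b * k"
    using Dpos by simp
  have "- (1 + d) * b * k - ((1 - d) * (1 - a*b)\<^sup>2 - (1 + d) * (b\<^sup>2 * (1 - a\<^sup>2)))
      = (1 - a*b) * (d * (1 - b\<^sup>2) - D)"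
    unfolding k_def D_def by algebra
  then have "0 \<le> (1 - a*b) * (d * (1 - b\<^sup>2) - D)" using i1 by linarith
  then have "0 \<le> d * (1 - b\<^sup>2) - D" using ab1 by (simp add: zero_le_mult_iff)
  moreover have "0 < 1 - b\<^sup>2" using b1 b0 by (simp add: power_less_one_iff abs_square_less_1)
  ultimately show ?thesis unfolding D_def[symmetric] by (simp add: divide_le_eq)
qed



lemma bf_sym: "bf m A M N = bf m A N M"
  by (simp add: bf_def mult.commute)

lemma sqn_bf: "sqn m A M = bf m A M M"
  by (simp add: sqn_def bf_def power2_eq_square)

lemma bf_lin2:
  assumes "is_linmap m A" shows "linear (\<lambda>N. bf m A M N)"
proof (rule linearI)
  fix x y and c :: real
  have "A (x + y) i = A x i + A y i" "A (c *\<^sub>R x) i = c * A x i" if "i < m" for i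
  proof -
    have l: "linear (\<lambda>E. A E i)" using assms that by (simp add: is_linmap_def)
    show "A (x + y) i = A x i + A y i" using linear_add[OF l, of x y] by simp
    show "A (c *\<^sub>R x) i = c * A x i" using linear_cmul[OF l, of c x] by simp
  qed
  then show "bf m A M (x + y) = bf m A M x + bf m A M y" "bf m A M (c *\<^sub>R x) = c *\<^sub>R bf m A M x"
    by (auto simp: bf_def algebra_simps sum.distrib sum_distrib_left intro!: sum.cong)
qed

lemma bf_quad:
  assumes "is_linmap m A"
  shows "bf m A (s *\<^sub>R M + t *\<^sub>R N) (s *\<^sub>R M + t *\<^sub>R N)
     = s\<^sup>2 * bf m A M M + 2 * s * t * bf m A M N + t\<^sup>2 * bf m A N N"
proof -
  have "A (s *\<^sub>R M + t *\<^sub>R N) i = s * A M i + t * A N i" if "i < m" for i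
  proof -
    have l: "linear (\<lambda>E. A E i)" using assms that by (simp add: is_linmap_def)
    show ?thesis using linear_add[OF l, of "s *\<^sub>R M" "t *\<^sub>R N"] linear_cmul[OF l, of s M] linear_cmul[OF l, of t N] by simp
  qed
  then have "bf m A (s *\<^sub>R M + t *\<^sub>R N) (s *\<^sub>R M + t *\<^sub>R N) = (\<Sum>i<m. (s * A M i + t * A N i) * (s * A M i + t * A N i))"
    by (simp add: bf_def)
  also have "\<dots> = s\<^sup>2 * bf m A M M + 2 * s * t * bf m A M N + t\<^sup>2 * bf m A N N"
    by (simp add: bf_def sum.distrib sum_distrib_left algebra_simps power2_eq_square)
  finally show ?thesis .
qed

lemma norm_quad:
  fixes M N :: "'a::real_inner"
  shows "(norm (s *\<^sub>R M + t *\<^sub>R N))\<^sup>2 = s\<^sup>2 * (norm M)\<^sup>2 + 2 * s * t * (M \<bullet> N) + t\<^sup>2 * (norm N)\<^sup>2"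
  unfolding power2_norm_eq_inner by (simp add: inner_add_left inner_add_right inner_commute algebra_simps power2_eq_square)

definition outer :: "real^'a \<Rightarrow> real^'b \<Rightarrow> real^'b^'a" where
  "outer a b = (\<chi> i j. a$i * b$j)"

lemma outer_transpose: "transpose (outer a b) = outer b a"
  by (simp add: outer_def transpose_def vec_eq_iff mult.commute)

lemma mm_outer: "(A::real^'a^'c) ** outer a b = outer (A *v a) b"
  by (simp add: outer_def vec_eq_iff matrix_matrix_mult_def matrix_vector_mult_def sum_distrib_right mult.assoc)

lemma outer_outer: "outer a b ** outer c d = (b \<bullet> c) *\<^sub>R outer a d"
  by (simp add: outer_def vec_eq_iff matrix_matrix_mult_def inner_vec_def sum_distrib_left sum_distrib_right mult_ac)

lemma inner_outer: "outer a b \<bullet> outer c d = (a \<bullet> c) * (b \<bullet> d)"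
  by (simp add: outer_def inner_vec_def sum_product mult_ac) (rule sum.swap)

lemma col_comp: "(M *v axis k 1) $ i = (M::real^'a^'b) $ i $ k"
  unfolding matrix_vector_mult_basis column_def by simp

lemma sum_outer: "(\<Sum>k\<in>UNIV. outer (M *v axis k 1) (M *v axis k 1)) = (M::real^'r^'n) ** transpose M"
  by (simp add: vec_eq_iff outer_def col_comp matrix_matrix_mult_def transpose_def)

lemma trace_MMt: "trace ((M::real^'r^'n) ** transpose M) = (\<Sum>k\<in>UNIV. (norm (M *v axis k 1))\<^sup>2)"
proof -
  have "trace (M ** transpose M) = (\<Sum>i\<in>UNIV. \<Sum>k\<in>UNIV. M$i$k * M$i$k)"
    by (simp add: trace_def matrix_matrix_mult_def transpose_def)
  also have "\<dots> = (\<Sum>k\<in>UNIV. \<Sum>i\<in>UNIV. M$i$k * M$i$k)" by (rule sum.swap)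
  also have "\<dots> = (\<Sum>k\<in>UNIV. (norm (M *v axis k 1))\<^sup>2)"
    by (simp add: power2_norm_eq_inner inner_vec_def col_comp)
  finally show ?thesis .
qed

lemma trace_MMt_nonneg: "0 \<le> trace ((M::real^'r^'n) ** transpose M)"
  by (simp add: trace_MMt sum_nonneg)

lemma inner_sym_idem:
  fixes Q M :: "real^'n^'n"
  assumes "transpose Q = Q" "Q ** Q = Q"
  shows "M \<bullet> (Q ** M ** Q) = (Q ** M ** Q) \<bullet> (Q ** M ** Q)"
proof -
  have "(Q ** M ** Q) \<bullet> (Q ** M ** Q) = (Q ** M) \<bullet> (Q ** M ** Q ** transpose Q)"
    by (rule inner_mm_right)
  also have "\<dots> = (Q ** M) \<bullet> (Q ** M ** Q)" using assms by (simp add: matrix_mul_assoc[symmetric])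
  also have "\<dots> = M \<bullet> (transpose Q ** (Q ** M ** Q))" by (rule inner_mm_left)
  also have "\<dots> = M \<bullet> (Q ** M ** Q)" using assms by (simp add: matrix_mul_assoc)
  finally show ?thesis by simp
qed



lemma main_bound:
  fixes X Z :: "real^'r^'n"
  assumes E0: "X ** transpose X \<noteq> Z ** transpose Z"
    and lin: "is_linmap m A" and rip: "RIP d (CARD('r) + rank Z) m A"
    and sop: "second_order_point (fA m A Z) X"
  shows "delta_lb X Z \<le> d"
proof -
  from rip obtain \<nu> where d0: "0 \<le> d" "d < 1" and nu: "\<nu> > 0"
    and ripb: "\<And>M::real^'n^'n. rank M \<le> CARD('r) + rank Z \<Longrightarrow>
        (1 - d) * (norm M)\<^sup>2 \<le> (1/\<nu>) * sqn m A M \<and> (1/\<nu>) * sqn m A M \<le> (1 + d) * (norm M)\<^sup>2"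
    unfolding RIP_def by blast
  have ripF: "(1 - d) * (norm M)\<^sup>2 \<le> bf m A M M / \<nu>" "bf m A M M / \<nu> \<le> (1 + d) * (norm M)\<^sup>2"
    if "inF X Z M" for M
    using ripb[OF inF_rank[OF that]] by (auto simp: sqn_bf)
  define Y where "Y = pinv X"
  define P where "P = X ** Y"
  define Q where "Q = (mat 1 :: real^'n^'n) - P"
  define E where "E = X ** transpose X - Z ** transpose Z"
  define Zp where "Zp = Q ** Z"
  define W where "W = Zp ** transpose Zp"
  have mp: "X ** Y ** X = X" "Y ** X ** Y = Y" "transpose P = P"
    using pinv_mp[of X] by (auto simp: is_mp_def Y_def P_def)
  have PX: "P ** X = X" using mp by (simp add: P_def)
  have XtP: "transpose X ** P = transpose X"
  proof -
    have "transpose (P ** X) = transpose X ** P" using mp(3) by (simp add: matrix_transpose_mul)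
    then show ?thesis using PX by simp
  qed
  have PP: "P ** P = P" unfolding P_def by (metis matrix_mul_assoc mp(1))
  have QT: "transpose Q = Q" by (simp add: Q_def transpose_diff mp(3))
  have QQ: "Q ** Q = Q" by (simp add: Q_def mm_diff_rdistrib mm_diff_ldistrib PP)
  have QX: "Q ** X = 0" by (simp add: Q_def mm_diff_rdistrib PX)
  have XtQ: "transpose X ** Q = 0" by (simp add: Q_def mm_diff_ldistrib XtP)
  have Zperp: "Zperp X Z = Zp" by (simp add: Zperp_def Zp_def Q_def P_def Y_def)
  have ET: "transpose E = E" by (simp add: E_def transpose_diff matrix_transpose_mul)
  have W2: "W = Q ** Z ** transpose Z ** Q"
    by (simp add: W_def Zp_def matrix_transpose_mul QT matrix_mul_assoc)
  have QEQ: "Q ** E ** Q = - W"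
  proof -
    have "Q ** E ** Q = Q ** X ** transpose X ** Q - Q ** Z ** transpose Z ** Q"
      by (simp add: E_def mm_diff_ldistrib mm_diff_rdistrib matrix_mul_assoc)
    then show ?thesis by (simp add: QX W2)
  qed
  have QEQ2: "Q ** E ** Q = E - P ** E - E ** P + P ** E ** P"
    by (simp add: Q_def mm_diff_rdistrib mm_diff_ldistrib matrix_mul_assoc algebra_simps)
  have EW: "E \<bullet> W = - (norm W)\<^sup>2"
  proof -
    have "E \<bullet> (Q ** E ** Q) = (Q ** E ** Q) \<bullet> (Q ** E ** Q)" by (rule inner_sym_idem[OF QT QQ])
    then show ?thesis unfolding QEQ by (simp add: power2_norm_eq_inner)
  qed
  have nEW: "(norm (E + W))\<^sup>2 = (norm E)\<^sup>2 - (norm W)\<^sup>2"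
    using EW unfolding power2_norm_eq_inner by (simp add: inner_add_left inner_add_right inner_commute)
  have WleE: "norm W \<le> norm E"
  proof -
    have "(norm W)\<^sup>2 \<le> (norm E)\<^sup>2" using nEW by (metis diff_ge_0_iff_ge zero_le_power2)
    then show ?thesis by (simp add: power2_le_iff_abs_le)
  qed
  have Ene: "E \<noteq> 0" using E0 by (simp add: E_def)
  have eP: "0 < norm E" using Ene by simp
  have inF_Zp: "inF X Z (Zp ** C)" for C :: "real^'n^'r"
  proof -
    have "Zp ** C = Z ** C - X ** (Y ** Z ** C)"
      by (simp add: Zp_def Q_def P_def mm_diff_rdistrib matrix_mul_assoc)
    then show ?thesis using inF_diff[OF inF_leftZ inF_left] by metis
  qed
  have inF_E: "inF X Z E" unfolding E_def by (rule inF_diff[OF inF_left inF_leftZ])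
  have inF_W: "inF X Z W" unfolding W_def by (rule inF_Zp)
  have inF_comb: "inF X Z (s *\<^sub>R E + t *\<^sub>R W)" for s t
    by (intro inF_add inF_scale inF_E inF_W)
  define V1 where "V1 = E ** transpose Y"
  define V2 where "V2 = P ** E ** transpose Y"
  have S1: "X ** transpose V1 + V1 ** transpose X = P ** E + E ** P"
  proof -
    have a: "X ** transpose V1 = P ** E"
      by (simp add: V1_def matrix_transpose_mul ET P_def matrix_mul_assoc)
    have "V1 ** transpose X = E ** transpose P"
      by (simp add: V1_def P_def matrix_transpose_mul matrix_mul_assoc)
    then show ?thesis using a mp(3) by simp
  qed
  have S2: "X ** transpose V2 + V2 ** transpose X = P ** E ** P + P ** E ** P"
  proof -
    have tv: "transpose V2 = Y ** E ** transpose P" by (simp add: V2_def matrix_transpose_mul ET matrix_mul_assoc)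
    have a: "X ** transpose V2 = P ** E ** P"
      unfolding tv mp(3) by (simp add: P_def matrix_mul_assoc)
    have tp: "transpose Y ** transpose X = transpose P" by (simp add: P_def matrix_transpose_mul)
    have "V2 ** transpose X = P ** E ** (transpose Y ** transpose X)"
      by (simp add: V2_def matrix_mul_assoc)
    then have "V2 ** transpose X = P ** E ** transpose P" using tp by simp
    then show ?thesis using a mp(3) by simp
  qed
  have g1: "bf m A E (P ** E + E ** P) = 0"
    using sop_conditions(1)[OF lin sop, of V1] S1 by (simp add: E_def)
  have g2: "bf m A E (P ** E ** P + P ** E ** P) = 0"
    using sop_conditions(1)[OF lin sop, of V2] S2 by (simp add: E_def)
  have EWe: "E + W = (P ** E + E ** P) - P ** E ** P"
  proof -
    have "W = - (Q ** E ** Q)" using QEQ by simp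
    then show ?thesis unfolding QEQ2 by (simp add: algebra_simps)
  qed
  have lb: "linear (\<lambda>N. bf m A E N)" by (rule bf_lin2[OF lin])
  have g2': "bf m A E (P ** E ** P) = 0"
  proof -
    have "bf m A E (P ** E ** P + P ** E ** P) = bf m A E (P ** E ** P) + bf m A E (P ** E ** P)"
      by (rule linear_add[OF lb])
    then show ?thesis using g2 by linarith
  qed
  have gEW: "bf m A E (E + W) = 0"
    unfolding EWe using g1 g2' linear_diff[OF lb] by simp
  then have b11: "bf m A E E = - bf m A E W"
    using linear_add[OF lb, of E W] by simp
  obtain u where u: "norm u = 1" "(norm (X *v u))\<^sup>2 = (sigma_min X)\<^sup>2"
    using sigma_min_vec[of X] by blast
  define \<sigma>2 where "\<sigma>2 = (sigma_min X)\<^sup>2"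
  define z where "z k = Zp *v axis k 1" for k
  define Vk where "Vk k = outer (z k) u" for k
  define Sk where "Sk k = X ** transpose (Vk k) + Vk k ** transpose X" for k
  have Sk_eq: "Sk k = outer (X *v u) (z k) + outer (z k) (X *v u)" for k
  proof -
    have a: "X ** transpose (Vk k) = outer (X *v u) (z k)" by (simp add: Vk_def outer_transpose mm_outer)
    have "Vk k ** transpose X = transpose (X ** transpose (Vk k))" by (simp add: matrix_transpose_mul)
    then have "Vk k ** transpose X = outer (z k) (X *v u)" using a by (simp add: outer_transpose)
    then show ?thesis using a by (simp add: Sk_def)
  qed
  have uu: "u \<bullet> u = 1" using u(1) by (simp add: norm_eq_1)
  have VV: "Vk k ** transpose (Vk k) = outer (z k) (z k)" for k
    by (simp add: Vk_def outer_transpose outer_outer uu)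
  have orthz: "(X *v u) \<bullet> z k = 0" for k
  proof -
    have "transpose X *v z k = (transpose X ** Zp) *v axis k 1" by (simp add: z_def matrix_vector_mul_assoc)
    also have "transpose X ** Zp = 0" by (simp add: Zp_def matrix_mul_assoc XtQ)
    finally have "transpose X *v z k = 0" by simp
    then show ?thesis using tX_inner2[of X "z k" u] by (simp add: inner_commute)
  qed
  have xu: "(X *v u) \<bullet> (X *v u) = \<sigma>2" using u(2) by (simp add: \<sigma>2_def power2_norm_eq_inner)
  have nSk: "(norm (Sk k))\<^sup>2 = 2 * \<sigma>2 * (norm (z k))\<^sup>2" for k
  proof -
    have "(norm (Sk k))\<^sup>2 = Sk k \<bullet> Sk k" by (simp add: power2_norm_eq_inner)
    also have "\<dots> = 2 * (((X *v u) \<bullet> (X *v u)) * (z k \<bullet> z k)) + 2 * (((X *v u) \<bullet> z k) * (z k \<bullet> (X *v u)))"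
      unfolding Sk_eq by (simp add: inner_add_left inner_add_right inner_outer mult.commute)
    also have "\<dots> = 2 * \<sigma>2 * (norm (z k))\<^sup>2" using orthz[of k] xu by (simp add: power2_norm_eq_inner)
    finally show ?thesis .
  qed
  have inF_Sk: "inF X Z (Sk k)" for k
  proof -
    have "outer (X *v u) (z k) = X ** outer u (z k)" by (simp add: mm_outer)
    moreover have "outer (z k) (X *v u) = Zp ** outer (axis k 1) (X *v u)" by (simp add: mm_outer z_def)
    ultimately show ?thesis unfolding Sk_eq by (metis inF_add inF_left inF_Zp)
  qed
  have hk: "0 \<le> bf m A (Sk k) (Sk k) + 2 * bf m A E (outer (z k) (z k))" for k
    using sop_conditions(2)[OF lin sop, of "Vk k"] unfolding Sk_def[symmetric] VV E_def by simp
  have rk: "bf m A (Sk k) (Sk k) \<le> \<nu> * ((1 + d) * (2 * \<sigma>2 * (norm (z k))\<^sup>2))" for k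
    using ripF(2)[OF inF_Sk[of k]] nu unfolding nSk by (simp add: divide_le_eq mult.commute)
  have sumW: "(\<Sum>k\<in>UNIV. outer (z k) (z k)) = W" by (simp add: z_def W_def sum_outer)
  have trW: "trace W = (\<Sum>k\<in>UNIV. (norm (z k))\<^sup>2)" by (simp add: W_def z_def trace_MMt)
  have bEW: "bf m A E W = (\<Sum>k\<in>UNIV. bf m A E (outer (z k) (z k)))"
    unfolding sumW[symmetric] by (rule linear_sum[OF lb])
  have "0 \<le> (\<Sum>k\<in>UNIV. bf m A (Sk k) (Sk k) + 2 * bf m A E (outer (z k) (z k)))"
    by (rule sum_nonneg) (use hk in auto)
  also have "\<dots> = (\<Sum>k\<in>UNIV. bf m A (Sk k) (Sk k)) + 2 * bf m A E W"
    by (simp add: sum.distrib bEW sum_distrib_left)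
  also have "(\<Sum>k\<in>UNIV. bf m A (Sk k) (Sk k)) \<le> (\<Sum>k\<in>UNIV. \<nu> * ((1 + d) * (2 * \<sigma>2 * (norm (z k))\<^sup>2)))"
    by (rule sum_mono) (rule rk)
  also have "(\<Sum>k\<in>UNIV. \<nu> * ((1 + d) * (2 * \<sigma>2 * (norm (z k))\<^sup>2))) = 2 * (\<nu> * (1 + d) * \<sigma>2 * trace W)"
    by (simp add: trW sum_distrib_left mult_ac)
  finally have hs0: "- (\<nu> * (1 + d) * \<sigma>2 * trace W) \<le> bf m A E W" by simp
  have alpha: "alpha_lb X Z = norm W / norm E" by (simp add: alpha_lb_def Zperp W_def E_def)
  have s0: "0 \<le> \<sigma>2" by (simp add: \<sigma>2_def)
  have trW0: "0 \<le> trace W" unfolding W_def by (rule trace_MMt_nonneg)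
  show ?thesis
  proof (cases "W = 0")
    case True
    have "bf m A E W = 0" using True linear_0[OF lb] by simp
    then have "bf m A E E = 0" using b11 by simp
    then have "(1 - d) * (norm E)\<^sup>2 \<le> 0" using ripF(1)[OF inF_E] by simp
    then have d1: "1 \<le> d" using eP by (simp add: mult_le_0_iff)
    have a0: "alpha_lb X Z = 0" using True alpha by simp
    have b0: "0 \<le> beta_lb X Z"
      using True s0 eP by (simp add: beta_lb_def Zperp W_def[symmetric] E_def[symmetric])
    have "delta_lb X Z = 1" using a0 b0 by (simp add: delta_lb_def gamma_def)
    then show ?thesis using d1 by simp
  next
    case False
    have wP: "0 < norm W" using False by simp
    have Zp0: "Zp \<noteq> 0" using False by (auto simp: W_def)
    define e where "e = norm E"
    define w where "w = norm W"
    define a where "a = w / e"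
    define b where "b = \<sigma>2 / e * (trace W / w)"
    have ea: "alpha_lb X Z = a" by (simp add: alpha a_def w_def e_def)
    have eb: "beta_lb X Z = b"
      using Zp0 by (simp add: beta_lb_def Zperp W_def[symmetric] E_def[symmetric] b_def e_def w_def \<sigma>2_def)
    have e0: "0 < e" using eP by (simp add: e_def)
    have w0: "0 < w" using wP by (simp add: w_def)
    have a0: "0 < a" using e0 w0 by (simp add: a_def)
    have a1: "a \<le> 1" using WleE e0 by (simp add: a_def w_def e_def)
    have b0: "0 \<le> b" using s0 trW0 e0 w0 by (simp add: b_def)
    define x11 where "x11 = bf m A E E / (\<nu> * e\<^sup>2)"
    define x12 where "x12 = bf m A E W / (\<nu> * e * w)"
    define x22 where "x22 = bf m A W W / (\<nu> * w\<^sup>2)"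
    have g: "x11 = - a * x12"
      using e0 w0 nu by (simp add: x11_def x12_def a_def b11 field_simps power2_eq_square)
    have hs: "- (1 + d) * b \<le> x12"
    proof -
      have "- (\<nu> * (1 + d) * \<sigma>2 * trace W) / (\<nu> * e * w) \<le> bf m A E W / (\<nu> * e * w)"
        by (rule divide_right_mono[OF hs0]) (use e0 w0 nu in simp)
      moreover have "- (\<nu> * (1 + d) * \<sigma>2 * trace W) / (\<nu> * e * w) = - (1 + d) * b"
        using e0 w0 nu by (simp add: b_def field_simps)
      ultimately show ?thesis by (simp add: x12_def)
    qed
    have form: "bf m A ((s / e) *\<^sub>R E + (t / w) *\<^sub>R W) ((s / e) *\<^sub>R E + (t / w) *\<^sub>R W) / \<nu>
        = s\<^sup>2 * x11 + 2 * s * t * x12 + t\<^sup>2 * x22" for s t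
      unfolding bf_quad[OF lin] using e0 w0 nu
      by (simp add: x11_def x12_def x22_def field_simps power2_eq_square)
    have nform: "(norm ((s / e) *\<^sub>R E + (t / w) *\<^sub>R W))\<^sup>2 = s\<^sup>2 - 2 * a * s * t + t\<^sup>2" for s t
      unfolding norm_quad EW using e0 w0
      by (simp add: a_def e_def[symmetric] w_def[symmetric] field_simps power2_eq_square)
    have lo: "(1 - d) * (s\<^sup>2 - 2 * a * s * t + t\<^sup>2) \<le> s\<^sup>2 * x11 + 2 * s * t * x12 + t\<^sup>2 * x22" for s t
      using ripF(1)[OF inF_comb[of "s / e" "t / w"]] unfolding form nform .
    have hi: "s\<^sup>2 * x11 + 2 * s * t * x12 + t\<^sup>2 * x22 \<le> (1 + d) * (s\<^sup>2 - 2 * a * s * t + t\<^sup>2)" for s t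
      using ripF(2)[OF inF_comb[of "s / e" "t / w"]] unfolding form nform .
    show ?thesis
    proof (cases "b \<ge> a / (1 + sqrt (1 - a\<^sup>2))")
      case True
      then have "delta_lb X Z = sqrt (1 - a\<^sup>2)" by (simp add: delta_lb_def gamma_def ea eb)
      also have "\<dots> \<le> d" by (rule branch1[OF less_imp_le[OF a0] a1 d0(1) g lo hi])
      finally show ?thesis .
    next
      case False
      then have bt: "b < a / (1 + sqrt (1 - a\<^sup>2))" by simp
      then have "delta_lb X Z = (1 - 2*a*b + b\<^sup>2) / (1 - b\<^sup>2)" by (simp add: delta_lb_def gamma_def ea eb)
      also have "\<dots> \<le> d" by (rule branch2[OF a0 a1 b0 bt g hs lo hi])
      finally show ?thesis .
    qed
  qed
qed


theorem theorem9:
  fixes X Z :: "real^'r^'n"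
  assumes "X ** transpose X \<noteq> Z ** transpose Z"
  shows "ereal (delta_lb X Z) \<le> delta X Z"
  unfolding delta_def
proof (rule Inf_greatest)
  fix y assume "y \<in> ereal ` {d. \<exists>m (A :: real^'n^'n \<Rightarrow> nat \<Rightarrow> real). 1 \<le> m \<and> is_linmap m A \<and>
      RIP d (CARD('r) + rank Z) m A \<and> second_order_point (fA m A Z) X}"
  then obtain d m and A :: "real^'n^'n \<Rightarrow> nat \<Rightarrow> real" where y: "y = ereal d"
    and h: "is_linmap m A" "RIP d (CARD('r) + rank Z) m A" "second_order_point (fA m A Z) X"
    by blast
  have "delta_lb X Z \<le> d" by (rule main_bound[OF assms h])
  then show "ereal (delta_lb X Z) \<le> y" by (simp add: y)
qed

end
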